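(* There is an absolute constant $C>0$ such that the following holds. Let $\langle\mathcal X,\mathcal C,d,\ell,(x_1,\dots,x_n)\rangle$ be a multiple facility location instance with $\mathcal X=[0,1]$ and $d(x,y)=|x-y|$, let $\epsilon\in(0,1)$, and let $k$ be an integer with $C/\epsilon^2\le k\le n$. Then $$\mathbb E_{S\sim\mathcal U_{k,n}}\big[\textsc{Social-Cost}(\overline y(S))\big]\le\textsc{Social-Opt}+\epsilon .$$
   Context: A multiple facility location instance $\langle\mathcal X,\mathcal C,d,\ell,(x_1,\dots,x_n)\rangle$ consists of a metric space $(\mathcal X,d)$, candidate locations $\mathcal C\subseteq\mathcal X$, a number $\ell\ge1$ of facilities and agent locations $x_1,\dots,x_n\in\mathcal X$. For $y=(y_1,\dots,y_\ell)\in\mathcal C^\ell$, agent $i$'s cost is $\mathrm{Cost}_i(y)=\min_{j\in[\ell]}d(x_i,y_j)$; $\textsc{Social-Cost}(y)=\frac1n\sum_i\mathrm{Cost}_i(y)$, $\textsc{Social-Opt}=\min_{y\in\mathcal C^\ell}\textsc{Social-Cost}(y)$, $\textsc{Panel-Cost}(y,S)=\frac1k\sum_{i\in S}\mathrm{Cost}_i(y)$, and $\overline y(S)\in\arg\min_{y\in\mathcal C^\ell}\textsc{Panel-Cost}(y,S)$ (minimizers assumed to exist). $\mathcal U_{k,n}$ is the uniform distribution over size-$k$ subsets of $[n]$. *)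

theory Defs
  imports Complex_Main
begin

text \<open>Agents are indexed by {..<n}, locations x :: nat => real;
  a facility profile y in C^l is a function y :: nat => real with y j in C for j < l.\<close>

definition profiles :: "real set \<Rightarrow> nat \<Rightarrow> (nat \<Rightarrow> real) set" where
  "profiles Cand l = {y. \<forall>j<l. y j \<in> Cand}"

definition agent_cost :: "nat \<Rightarrow> (nat \<Rightarrow> real) \<Rightarrow> real \<Rightarrow> real" where
  "agent_cost l y xi = Min ((\<lambda>j. \<bar>xi - y j\<bar>) ` {..<l})"

definition social_cost :: "nat \<Rightarrow> (nat \<Rightarrow> real) \<Rightarrow> nat \<Rightarrow> (nat \<Rightarrow> real) \<Rightarrow> real" where
  "social_cost n x l y = (\<Sum>i<n. agent_cost l y (x i)) / real n"

definition social_opt :: "real set \<Rightarrow> nat \<Rightarrow> (nat \<Rightarrow> real) \<Rightarrow> nat \<Rightarrow> real" where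
  "social_opt Cand n x l = (INF y\<in>profiles Cand l. social_cost n x l y)"

definition panel_cost :: "nat \<Rightarrow> nat \<Rightarrow> (nat \<Rightarrow> real) \<Rightarrow> nat set \<Rightarrow> (nat \<Rightarrow> real) \<Rightarrow> real" where
  "panel_cost l k x S y = (\<Sum>i\<in>S. agent_cost l y (x i)) / real k"

definition uniform_subset_expectation :: "nat \<Rightarrow> nat \<Rightarrow> (nat set \<Rightarrow> real) \<Rightarrow> real" where
  "uniform_subset_expectation k n f =
     (\<Sum>S\<in>{S. S \<subseteq> {..<n} \<and> card S = k}. f S) / real (n choose k)"

end

theory Submission
  imports Defs
begin


lemma card_subsets_containing:
  assumes U: "finite U" and T: "T \<subseteq> U" and Tk: "card T \<le> k"
  shows "card {S. S \<subseteq> U \<and> card S = k \<and> T \<subseteq> S} = (card U - card T) choose (k - card T)"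
proof -
  have fT: "finite T" using U T finite_subset by blast
  have "bij_betw (\<lambda>S. S - T) {S. S \<subseteq> U \<and> card S = k \<and> T \<subseteq> S} {R. R \<subseteq> U - T \<and> card R = k - card T}"
  proof (rule bij_betw_byWitness[where f' = "\<lambda>R. R \<union> T"])
    show "\<forall>a\<in>{S. S \<subseteq> U \<and> card S = k \<and> T \<subseteq> S}. a - T \<union> T = a" by auto
    show "\<forall>a'\<in>{R. R \<subseteq> U - T \<and> card R = k - card T}. a' \<union> T - T = a'" by auto
    show "(\<lambda>S. S - T) ` {S. S \<subseteq> U \<and> card S = k \<and> T \<subseteq> S} \<subseteq> {R. R \<subseteq> U - T \<and> card R = k - card T}"
      using fT by (auto simp: card_Diff_subset)
    show "(\<lambda>R. R \<union> T) ` {R. R \<subseteq> U - T \<and> card R = k - card T} \<subseteq> {S. S \<subseteq> U \<and> card S = k \<and> T \<subseteq> S}"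
    proof safe
      fix R x assume "R \<subseteq> U - T" "card R = k - card T"
      moreover have "finite R" using \<open>R \<subseteq> U - T\<close> U finite_subset by blast
      ultimately show "card (R \<union> T) = k" using fT Tk by (subst card_Un_disjoint) auto
    qed (use T in auto)
  qed
  then have "card {S. S \<subseteq> U \<and> card S = k \<and> T \<subseteq> S} = card {R. R \<subseteq> U - T \<and> card R = k - card T}"
    by (rule bij_betw_same_card)
  also have "\<dots> = card (U - T) choose (k - card T)" using U by (simp add: n_subsets)
  also have "card (U - T) = card U - card T" using T fT by (simp add: card_Diff_subset)
  finally show ?thesis .
qed

lemma count1:
  assumes "i < n" "1 \<le> k"
  shows "card {S. S \<subseteq> {..<n} \<and> card S = k \<and> i \<in> S} = (n - 1) choose (k - 1)"
  using card_subsets_containing[of "{..<n}" "{i}" k] assms by simp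

lemma count2:
  assumes "i < n" "j < n" "i \<noteq> j"
  shows "card {S. S \<subseteq> {..<n} \<and> card S = k \<and> i \<in> S \<and> j \<in> S} = (if 2 \<le> k then (n - 2) choose (k - 2) else 0)"
proof (cases "2 \<le> k")
  case True
  have "card {S. S \<subseteq> {..<n} \<and> card S = k \<and> {i,j} \<subseteq> S} = (n - 2) choose (k - 2)"
    using card_subsets_containing[of "{..<n}" "{i,j}" k] assms True by (simp add: numeral_2_eq_2)
  then show ?thesis using True by (simp add: numeral_2_eq_2)
next
  case False
  have ne: "card S \<noteq> k" if "S \<subseteq> {..<n}" "i \<in> S" "j \<in> S" for S
  proof -
    have "card {i,j} \<le> card S" using that by (intro card_mono) (auto intro: finite_subset[of _ "{..<n}"])
    then show ?thesis using assms False by simp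
  qed
  have "{S. S \<subseteq> {..<n} \<and> card S = k \<and> i \<in> S \<and> j \<in> S} = {}" using ne by auto
  then show ?thesis using False by simp
qed

definition subs :: "nat \<Rightarrow> nat \<Rightarrow> nat set set" where
  "subs n k = {S. S \<subseteq> {..<n} \<and> card S = k}"

lemma finite_subs: "finite (subs n k)"
  unfolding subs_def by (rule finite_subset[of _ "Pow {..<n}"]) auto

lemma sum_over_subs:
  assumes "1 \<le> k"
  shows "(\<Sum>S\<in>subs n k. \<Sum>i\<in>S. c i) = real ((n - 1) choose (k - 1)) * (\<Sum>i<n. c i :: real)"
proof -
  have "(\<Sum>S\<in>subs n k. \<Sum>i\<in>S. c i) = (\<Sum>S\<in>subs n k. \<Sum>i<n. c i * of_bool (i \<in> S))"
  proof (rule sum.cong[OF refl])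
    fix S assume "S \<in> subs n k"
    then have "S \<subseteq> {..<n}" by (simp add: subs_def)
    then have "{..<n} \<inter> {i. i \<in> S} = S" by auto
    then show "(\<Sum>i\<in>S. c i) = (\<Sum>i<n. c i * of_bool (i \<in> S))" by simp
  qed
  also have "\<dots> = (\<Sum>i<n. c i * (\<Sum>S\<in>subs n k. of_bool (i \<in> S)))"
    by (subst sum.swap) (simp add: sum_distrib_left)
  also have "\<dots> = (\<Sum>i<n. c i * real ((n - 1) choose (k - 1)))"
  proof (rule sum.cong[OF refl])
    fix i assume "i \<in> {..<n}"
    have "subs n k \<inter> {S. i \<in> S} = {S. S \<subseteq> {..<n} \<and> card S = k \<and> i \<in> S}" by (auto simp: subs_def)
    then show "c i * (\<Sum>S\<in>subs n k. of_bool (i \<in> S)) = c i * real ((n - 1) choose (k - 1))"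
      using count1[of i n k] \<open>i \<in> {..<n}\<close> assms finite_subs by simp
  qed
  finally show ?thesis by (simp add: sum_distrib_right mult.commute)
qed

lemma sum_card_inter:
  assumes "1 \<le> k" "A \<subseteq> {..<n}"
  shows "(\<Sum>S\<in>subs n k. real (card (A \<inter> S))) = real (card A) * real ((n - 1) choose (k - 1))"
proof -
  have "(\<Sum>S\<in>subs n k. real (card (A \<inter> S))) = (\<Sum>S\<in>subs n k. \<Sum>i\<in>S. of_bool (i \<in> A))"
  proof (rule sum.cong[OF refl])
    fix S assume "S \<in> subs n k"
    then have "finite S" unfolding subs_def using finite_subset by blast
    then show "real (card (A \<inter> S)) = (\<Sum>i\<in>S. of_bool (i \<in> A))" by (simp add: Int_commute Int_def)
  qed
  also have "\<dots> = real ((n - 1) choose (k - 1)) * (\<Sum>i<n. of_bool (i \<in> A))" by (rule sum_over_subs[OF assms(1)])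
  also have "(\<Sum>i<n. of_bool (i \<in> A) :: real) = real (card A)"
    using assms(2) by (simp add: Int_absorb1 Int_def[symmetric] Collect_mem_eq inf.absorb_iff2)
  finally show ?thesis by simp
qed

lemma sum_card_inter_sq:
  assumes k: "1 \<le> k" and A: "A \<subseteq> {..<n}"
  shows "(\<Sum>S\<in>subs n k. real (card (A \<inter> S))^2) =
    real (card A) * (real ((n - 1) choose (k - 1)) + (real (card A) - 1) * (if 2 \<le> k then real ((n - 2) choose (k - 2)) else 0))"
proof -
  define c2 :: real where "c2 = (if 2 \<le> k then real ((n - 2) choose (k - 2)) else 0)"
  have fA: "finite A" using A finite_subset by blast
  have "(\<Sum>S\<in>subs n k. real (card (A \<inter> S))^2) = (\<Sum>S\<in>subs n k. \<Sum>i\<in>A. \<Sum>j\<in>A. of_bool (i \<in> S \<and> j \<in> S))"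
  proof (rule sum.cong[OF refl])
    fix S
    have "real (card (A \<inter> S)) = (\<Sum>i\<in>A. of_bool (i \<in> S))" using fA by (simp add: Int_def)
    then have "real (card (A \<inter> S))^2 = (\<Sum>i\<in>A. of_bool (i \<in> S)) * (\<Sum>j\<in>A. of_bool (j \<in> S))"
      by (simp add: power2_eq_square)
    also have "\<dots> = (\<Sum>i\<in>A. \<Sum>j\<in>A. of_bool (i \<in> S \<and> j \<in> S))" by (simp add: sum_product of_bool_conj)
    finally show "real (card (A \<inter> S))^2 = (\<Sum>i\<in>A. \<Sum>j\<in>A. of_bool (i \<in> S \<and> j \<in> S))" .
  qed
  also have "\<dots> = (\<Sum>i\<in>A. \<Sum>j\<in>A. \<Sum>S\<in>subs n k. of_bool (i \<in> S \<and> j \<in> S))"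
    by (subst sum.swap, rule sum.cong[OF refl], rule sum.swap)
  also have "\<dots> = (\<Sum>i\<in>A. real ((n - 1) choose (k - 1)) + (real (card A) - 1) * c2)"
  proof (rule sum.cong[OF refl])
    fix i assume i: "i \<in> A"
    have cnt: "(\<Sum>S\<in>subs n k. of_bool (i \<in> S \<and> j \<in> S) :: real) = (if j = i then real ((n - 1) choose (k - 1)) else c2)"
      if j: "j \<in> A" for j
    proof -
      have e: "(\<Sum>S\<in>subs n k. of_bool (i \<in> S \<and> j \<in> S) :: real) = real (card (subs n k \<inter> {S. i \<in> S \<and> j \<in> S}))"
        using finite_subs by simp
      show ?thesis
      proof (cases "j = i")
        case True
        have "subs n k \<inter> {S. i \<in> S \<and> j \<in> S} = {S. S \<subseteq> {..<n} \<and> card S = k \<and> i \<in> S}" using True by (auto simp: subs_def)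
        with e count1[of i n k] i A k True show ?thesis by auto
      next
        case False
        have "subs n k \<inter> {S. i \<in> S \<and> j \<in> S} = {S. S \<subseteq> {..<n} \<and> card S = k \<and> i \<in> S \<and> j \<in> S}" by (auto simp: subs_def)
        moreover have "i < n" "j < n" using i j A by auto
        ultimately have "(\<Sum>S\<in>subs n k. of_bool (i \<in> S \<and> j \<in> S) :: real) = real (if 2 \<le> k then (n - 2) choose (k - 2) else 0)"
          using e count2[of i n j k] False by simp
        then show ?thesis using False unfolding c2_def by (simp split: if_split)
      qed
    qed
    have "(\<Sum>j\<in>A. \<Sum>S\<in>subs n k. of_bool (i \<in> S \<and> j \<in> S) :: real) = (\<Sum>j\<in>A. if j = i then real ((n - 1) choose (k - 1)) else c2)"
      using cnt by (rule sum.cong[OF refl])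
    also have "\<dots> = real ((n - 1) choose (k - 1)) + (\<Sum>j\<in>A - {i}. if j = i then real ((n - 1) choose (k - 1)) else c2)"
      using fA i by (subst sum.remove) auto
    also have "(\<Sum>j\<in>A - {i}. if j = i then real ((n - 1) choose (k - 1)) else c2) = (\<Sum>j\<in>A - {i}. c2)"
      by (rule sum.cong) auto
    also have "\<dots> = (real (card A) - 1) * c2"
    proof -
      have "card A \<noteq> 0" using fA i by auto
      then have "card A \<ge> 1" by linarith
      then show ?thesis using fA i by (simp add: card_Diff_singleton of_nat_diff)
    qed
    finally show "(\<Sum>j\<in>A. \<Sum>S\<in>subs n k. of_bool (i \<in> S \<and> j \<in> S)) = real ((n - 1) choose (k - 1)) + (real (card A) - 1) * c2" .
  qed
  also have "\<dots> = real (card A) * (real ((n - 1) choose (k - 1)) + (real (card A) - 1) * c2)" by simp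
  finally show ?thesis by (simp add: c2_def)
qed



lemma alg:
  fixes a n k N c1 c2 :: real
  assumes a0: "0 \<le> a" and an: "a \<le> n" and k1: "1 \<le> k" and kn: "k \<le> n" and N: "0 < N"
    and c1: "n * c1 = k * N" and c2: "0 \<le> c2" and aa: "0 \<le> a * (a - 1)"
    and c2k: "2 \<le> k \<Longrightarrow> (n - 1) * c2 = (k - 1) * c1" and c2k1: "k < 2 \<Longrightarrow> c2 = 0"
  shows "(a * c1 + a * (a - 1) * c2) / k^2 - 2 * (a / n) * (a * c1) / k + N * (a / n)^2 \<le> N / k"
proof -
  have n0: "n > 0" using k1 kn by linarith
  have c1e: "c1 = k * N / n" using c1 n0 by (simp add: field_simps)
  have E: "(a * c1 + a * (a - 1) * c2) / k^2 - 2 * (a / n) * (a * c1) / k + N * (a / n)^2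
      = a * N / (n * k) + a * (a - 1) * c2 / k^2 - N * (a / n)^2"
    using n0 k1 unfolding c1e by (simp add: field_simps power2_eq_square)
  have t1: "a * N / (n * k) \<le> N / k"
  proof -
    have "a / n \<le> 1" using an n0 by simp
    then have "(a / n) * (N / k) \<le> 1 * (N / k)" using N k1 by (intro mult_right_mono) auto
    then show ?thesis by (simp add: field_simps)
  qed
  have t2: "a * (a - 1) * c2 / k^2 \<le> N * (a / n)^2"
  proof (cases "k < 2")
    case True then show ?thesis using c2k1 N by simp
  next
    case False
    then have k2: "2 \<le> k" by simp
    have n1: "n - 1 > 0" using k2 kn by linarith
    have c2e: "c2 = (k - 1) * k * N / ((n - 1) * n)"
      using c2k[OF k2] n1 n0 c1e by (simp add: field_simps)
    have "a * (a - 1) * c2 / k^2 = (a * (a - 1) / ((n - 1) * n)) * ((k - 1) / k) * N"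
      unfolding c2e using k1 n0 n1 by (simp add: field_simps power2_eq_square)
    also have "\<dots> \<le> (a * (a - 1) / ((n - 1) * n)) * 1 * N"
    proof -
      have q: "(k - 1) / k \<le> 1" using k1 by simp
      have p: "0 \<le> a * (a - 1) / ((n - 1) * n)" using aa n0 n1 by simp
      have "(a * (a - 1) / ((n - 1) * n)) * ((k - 1) / k) \<le> (a * (a - 1) / ((n - 1) * n)) * 1"
        by (rule mult_left_mono[OF q p])
      then show ?thesis using N by (intro mult_right_mono) auto
    qed
    also have "a * (a - 1) / ((n - 1) * n) \<le> (a / n)^2"
    proof -
      have "(a - 1) * n \<le> a * (n - 1)" using an by (simp add: algebra_simps)
      then have q: "(a - 1) / (n - 1) \<le> a / n" using n0 n1 by (simp add: field_simps)
      have p: "0 \<le> a / n" using a0 n0 by simp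
      have "(a / n) * ((a - 1) / (n - 1)) \<le> (a / n) * (a / n)" by (rule mult_left_mono[OF q p])
      moreover have "a * (a - 1) / ((n - 1) * n) = (a / n) * ((a - 1) / (n - 1))" by (simp add: field_simps)
      ultimately show ?thesis by (simp add: power2_eq_square mult.commute[of "n - 1" n])
    qed
    then have "(a * (a - 1) / ((n - 1) * n)) * 1 * N \<le> (a / n)^2 * N" using N by (metis mult.right_neutral mult_right_mono less_imp_le)
    finally show ?thesis by (simp add: mult.commute)
  qed
  show ?thesis unfolding E using t1 t2 by linarith
qed

lemma mean_abs_le:
  fixes g :: "'a \<Rightarrow> real"
  assumes "finite I" "card I > 0" "(\<Sum>S\<in>I. (g S)^2) \<le> real (card I) * B"
  shows "(\<Sum>S\<in>I. \<bar>g S\<bar>) \<le> real (card I) * sqrt B"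
proof -
  define N where "N = real (card I)"
  define m where "m = (\<Sum>S\<in>I. \<bar>g S\<bar>) / N"
  have N0: "N > 0" using assms by (simp add: N_def)
  have "0 \<le> (\<Sum>S\<in>I. (\<bar>g S\<bar> - m)^2)" by (simp add: sum_nonneg)
  also have "\<dots> = (\<Sum>S\<in>I. (g S)^2) - 2 * m * (\<Sum>S\<in>I. \<bar>g S\<bar>) + N * m^2"
    by (simp add: power2_eq_square algebra_simps sum.distrib sum_subtractf sum_distrib_left N_def)
  also have "\<dots> = (\<Sum>S\<in>I. (g S)^2) - N * m^2"
    using N0 by (simp add: m_def power2_eq_square field_simps)
  finally have "N * m^2 \<le> N * B" using assms(3) by (simp add: N_def)
  then have "m^2 \<le> B" using N0 by simp
  then have "m \<le> sqrt B" using real_le_rsqrt by blast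
  then show ?thesis using N0 by (simp add: m_def N_def field_simps)
qed



lemma deviation:
  fixes h :: "real \<Rightarrow> real" and x :: "nat \<Rightarrow> real" and M :: nat
  assumes lip: "\<And>v w. h v \<le> h w + \<bar>v - w\<bar>"
    and x01: "\<forall>i<n. x i \<in> {0..1}" and S: "S \<subseteq> {..<n}" and cS: "card S = k" and k1: "1 \<le> k" and M: "0 < M"
  shows "(\<Sum>i<n. h (x i)) / real n - (\<Sum>i\<in>S. h (x i)) / real k \<le> 2 / real M +
     (\<Sum>b<M. \<bar>real (card {i. i < n \<and> b < nat \<lceil>x i * real M\<rceil>}) / real n
               - real (card ({i. i < n \<and> b < nat \<lceil>x i * real M\<rceil>} \<inter> S)) / real k\<bar>) / real M"
proof -
  define \<beta> where "\<beta> i = nat \<lceil>x i * real M\<rceil>" for i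
  define \<nu> where "\<nu> i = 1 / real n - of_bool (i \<in> S) / real k" for i
  define F where "F b = h (real b / real M)" for b
  define D where "D b = (\<Sum>i<n. of_bool (b < \<beta> i) * \<nu> i)" for b
  have kn: "k \<le> n" using S cS card_mono[of "{..<n}" S] by simp
  have n0: "real n > 0" using kn k1 by simp
  have k0: "real k > 0" using k1 by simp
  have M0: "real M > 0" using M by simp
  have lip2: "\<bar>h v - h w\<bar> \<le> \<bar>v - w\<bar>" for v w using lip[of v w] lip[of w v] by (simp add: abs_minus_commute)
  have \<beta>M: "\<beta> i \<le> M" if "i < n" for i
  proof -
    have "x i * real M \<le> real M" using x01 that M0 by (simp add: mult_left_le_one_le)
    then show ?thesis unfolding \<beta>_def by simp
  qed
  have \<beta>apx: "\<bar>x i - real (\<beta> i) / real M\<bar> \<le> 1 / real M" if "i < n" for i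
  proof -
    have t0: "x i * real M \<ge> 0" using x01 that by simp
    then have e: "real (\<beta> i) = real_of_int \<lceil>x i * real M\<rceil>" unfolding \<beta>_def by simp
    have "\<bar>x i * real M - real (\<beta> i)\<bar> \<le> 1" unfolding e
      using le_of_int_ceiling[of "x i * real M"] ceiling_correct[of "x i * real M"] by linarith
    then have "\<bar>(x i * real M - real (\<beta> i)) / real M\<bar> \<le> 1 / real M" using M0
      by (simp add: divide_right_mono)
    moreover have "(x i * real M - real (\<beta> i)) / real M = x i - real (\<beta> i) / real M" using M0 by (simp add: field_simps)
    ultimately show ?thesis by simp
  qed
  have sum_nu: "(\<Sum>i<n. \<nu> i) = 0"
  proof -
    have "(\<Sum>i<n. of_bool (i \<in> S) :: real) = real k" using S cS by (simp add: Int_absorb1 Int_def[symmetric] inf.absorb_iff2)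
    then show ?thesis using n0 k0 by (simp add: \<nu>_def sum_subtractf sum_divide_distrib[symmetric])
  qed
  have L: "(\<Sum>i<n. h (x i)) / real n - (\<Sum>i\<in>S. h (x i)) / real k = (\<Sum>i<n. h (x i) * \<nu> i)"
  proof -
    have "(\<Sum>i<n. h (x i) * of_bool (i \<in> S) / real k) = (\<Sum>i<n. (h (x i) / real k) * of_bool (i \<in> S))"
      by (rule sum.cong) auto
    also have "\<dots> = (\<Sum>i\<in>{..<n} \<inter> {i. i \<in> S}. h (x i) / real k)" by (rule sum_mult_of_bool_eq) simp
    also have "{..<n} \<inter> {i. i \<in> S} = S" using S by auto
    finally have e: "(\<Sum>i<n. h (x i) * of_bool (i \<in> S) / real k) = (\<Sum>i\<in>S. h (x i)) / real k"
      by (simp add: sum_divide_distrib)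
    have "(\<Sum>i<n. h (x i) * \<nu> i) = (\<Sum>i<n. h (x i) / real n) - (\<Sum>i<n. h (x i) * of_bool (i \<in> S) / real k)"
      by (simp add: \<nu>_def sum_subtractf[symmetric] right_diff_distrib)
    then show ?thesis unfolding e by (simp add: sum_divide_distrib)
  qed
  have split: "(\<Sum>i<n. h (x i) * \<nu> i) = (\<Sum>i<n. F (\<beta> i) * \<nu> i) + (\<Sum>i<n. (h (x i) - F (\<beta> i)) * \<nu> i)"
    by (simp add: sum.distrib[symmetric] algebra_simps)
  have err: "(\<Sum>i<n. (h (x i) - F (\<beta> i)) * \<nu> i) \<le> 2 / real M"
  proof -
    have "(\<Sum>i<n. (h (x i) - F (\<beta> i)) * \<nu> i) \<le> (\<Sum>i<n. (1 / real M) * (1 / real n + of_bool (i \<in> S) / real k))"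
    proof (rule sum_mono)
      fix i assume i: "i \<in> {..<n}"
      have a: "\<bar>h (x i) - F (\<beta> i)\<bar> \<le> 1 / real M" using lip2 \<beta>apx i unfolding F_def by (meson lessThan_iff order_trans)
      have b: "\<bar>\<nu> i\<bar> \<le> 1 / real n + of_bool (i \<in> S) / real k" unfolding \<nu>_def using n0 k0 by (simp add: abs_le_iff)
      have "(h (x i) - F (\<beta> i)) * \<nu> i \<le> \<bar>h (x i) - F (\<beta> i)\<bar> * \<bar>\<nu> i\<bar>" by (simp add: abs_mult[symmetric])
      also have "\<dots> \<le> (1 / real M) * (1 / real n + of_bool (i \<in> S) / real k)"
        using a b by (intro mult_mono) auto
      finally show "(h (x i) - F (\<beta> i)) * \<nu> i \<le> (1 / real M) * (1 / real n + of_bool (i \<in> S) / real k)" .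
    qed
    also have "\<dots> = (1 / real M) * (1 + 1)"
    proof -
      have "(\<Sum>i<n. of_bool (i \<in> S) :: real) = real k" using S cS by (simp add: Int_absorb1 Int_def[symmetric] inf.absorb_iff2)
      then show ?thesis using n0 k0 by (simp add: sum_distrib_left[symmetric] sum.distrib sum_divide_distrib[symmetric])
    qed
    finally show ?thesis by simp
  qed
  have main: "(\<Sum>i<n. F (\<beta> i) * \<nu> i) = (\<Sum>b<M. (F (Suc b) - F b) * D b)"
  proof -
    have tel: "F (\<beta> i) = F 0 + (\<Sum>b<M. (F (Suc b) - F b) * of_bool (b < \<beta> i))" if "i < n" for i
    proof -
      have "(\<Sum>b<M. (F (Suc b) - F b) * of_bool (b < \<beta> i)) = (\<Sum>b\<in>{..<M} \<inter> {b. b < \<beta> i}. F (Suc b) - F b)"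
        by simp
      also have "{..<M} \<inter> {b. b < \<beta> i} = {..<\<beta> i}" using \<beta>M[OF that] by auto
      also have "(\<Sum>b<\<beta> i. F (Suc b) - F b) = F (\<beta> i) - F 0" by (rule sum_lessThan_telescope)
      finally show ?thesis by simp
    qed
    have "(\<Sum>i<n. F (\<beta> i) * \<nu> i) = (\<Sum>i<n. F 0 * \<nu> i + (\<Sum>b<M. (F (Suc b) - F b) * of_bool (b < \<beta> i) * \<nu> i))"
    proof (rule sum.cong[OF refl])
      fix i assume "i \<in> {..<n}"
      then have ti: "F (\<beta> i) = F 0 + (\<Sum>b<M. (F (Suc b) - F b) * of_bool (b < \<beta> i))" using tel by simp
      show "F (\<beta> i) * \<nu> i = F 0 * \<nu> i + (\<Sum>b<M. (F (Suc b) - F b) * of_bool (b < \<beta> i) * \<nu> i)"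
        by (simp only: ti distrib_right sum_distrib_right)
    qed
    also have "\<dots> = F 0 * (\<Sum>i<n. \<nu> i) + (\<Sum>b<M. \<Sum>i<n. (F (Suc b) - F b) * of_bool (b < \<beta> i) * \<nu> i)"
      by (simp add: sum.distrib sum_distrib_left sum.swap[of _ "{..<M}"])
    also have "\<dots> = (\<Sum>b<M. (F (Suc b) - F b) * D b)"
      by (simp only: sum_nu D_def sum_distrib_left mult.assoc mult_zero_right add_0_left)
    finally show ?thesis .
  qed
  have Deq: "D b = real (card {i. i < n \<and> b < nat \<lceil>x i * real M\<rceil>}) / real n
               - real (card ({i. i < n \<and> b < nat \<lceil>x i * real M\<rceil>} \<inter> S)) / real k" for b
  proof -
    have e1: "(\<Sum>i<n. of_bool (b < \<beta> i) :: real) = real (card {i. i < n \<and> b < nat \<lceil>x i * real M\<rceil>})"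
    proof -
      have "{..<n} \<inter> {i. b < \<beta> i} = {i. i < n \<and> b < nat \<lceil>x i * real M\<rceil>}" by (auto simp: \<beta>_def)
      then show ?thesis by simp
    qed
    have e2: "(\<Sum>i<n. of_bool (b < \<beta> i \<and> i \<in> S) :: real) = real (card ({i. i < n \<and> b < nat \<lceil>x i * real M\<rceil>} \<inter> S))"
    proof -
      have "{..<n} \<inter> {i. b < \<beta> i \<and> i \<in> S} = {i. i < n \<and> b < nat \<lceil>x i * real M\<rceil>} \<inter> S" by (auto simp: \<beta>_def)
      then show ?thesis by simp
    qed
    have "D b = (\<Sum>i<n. of_bool (b < \<beta> i)) / real n - (\<Sum>i<n. of_bool (b < \<beta> i \<and> i \<in> S)) / real k"
    proof -
      have "D b = (\<Sum>i<n. of_bool (b < \<beta> i) / real n - of_bool (b < \<beta> i \<and> i \<in> S) / real k)"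
        unfolding D_def \<nu>_def by (rule sum.cong) auto
      then show ?thesis by (simp only: sum_subtractf sum_divide_distrib)
    qed
    then show ?thesis using e1 e2 by simp
  qed
  have bnd: "(\<Sum>b<M. (F (Suc b) - F b) * D b) \<le> (\<Sum>b<M. \<bar>D b\<bar>) / real M"
  proof -
    have "(\<Sum>b<M. (F (Suc b) - F b) * D b) \<le> (\<Sum>b<M. \<bar>D b\<bar> / real M)"
    proof (rule sum_mono)
      fix b
      have "\<bar>F (Suc b) - F b\<bar> \<le> \<bar>real (Suc b) / real M - real b / real M\<bar>" unfolding F_def by (rule lip2)
      also have "\<dots> = 1 / real M" using M0 by (simp add: field_simps)
      finally have "\<bar>F (Suc b) - F b\<bar> \<le> 1 / real M" .
      then have "\<bar>F (Suc b) - F b\<bar> * \<bar>D b\<bar> \<le> 1 / real M * \<bar>D b\<bar>" by (rule mult_right_mono) simp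
      then show "(F (Suc b) - F b) * D b \<le> \<bar>D b\<bar> / real M" by (simp add: abs_mult[symmetric])
    qed
    then show ?thesis by (simp add: sum_divide_distrib)
  qed
  show ?thesis using L split err main bnd Deq by simp
qed


lemma var_subs:
  assumes k1: "1 \<le> k" and kn: "k \<le> n" and A: "A \<subseteq> {..<n}"
  shows "(\<Sum>S\<in>subs n k. \<bar>real (card A) / real n - real (card (A \<inter> S)) / real k\<bar>) \<le> real (n choose k) * (1 / sqrt (real k))"
proof -
  define a where "a = real (card A)"
  define N where "N = real (n choose k)"
  define c1 where "c1 = real ((n - 1) choose (k - 1))"
  define c2 where "c2 = (if 2 \<le> k then real ((n - 2) choose (k - 2)) else 0)"
  have cardI: "card (subs n k) = n choose k" unfolding subs_def using n_subsets[of "{..<n}" k] by simp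
  have N0: "N > 0" unfolding N_def using kn by simp
  have s1: "(\<Sum>S\<in>subs n k. real (card (A \<inter> S))) = a * c1" using sum_card_inter[OF k1 A] by (simp add: a_def c1_def)
  have s2: "(\<Sum>S\<in>subs n k. real (card (A \<inter> S))^2) = a * c1 + a * (a - 1) * c2"
    using sum_card_inter_sq[OF k1 A] by (simp add: a_def c1_def c2_def algebra_simps)
  have exp: "(\<Sum>S\<in>subs n k. (real (card (A \<inter> S)) / real k - a / real n)^2)
     = (\<Sum>S\<in>subs n k. real (card (A \<inter> S))^2) / (real k)^2 - 2 * (a / real n) * (\<Sum>S\<in>subs n k. real (card (A \<inter> S))) / real k + N * (a / real n)^2"
  proof -
    have "(\<Sum>S\<in>subs n k. (real (card (A \<inter> S)) / real k - a / real n)^2)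
       = (\<Sum>S\<in>subs n k. real (card (A \<inter> S))^2 / (real k)^2 - 2 * (a / real n) * real (card (A \<inter> S)) / real k + (a / real n)^2)"
      by (rule sum.cong) (auto simp: power2_diff power_divide mult.commute mult.left_commute)
    also have "\<dots> = (\<Sum>S\<in>subs n k. real (card (A \<inter> S))^2) / (real k)^2 - 2 * (a / real n) * (\<Sum>S\<in>subs n k. real (card (A \<inter> S))) / real k + N * (a / real n)^2"
      by (simp add: sum.distrib sum_subtractf sum_divide_distrib sum_distrib_left cardI N_def)
    finally show ?thesis .
  qed
  have c1e: "real n * c1 = real k * N"
    using times_binomial_minus1_eq[of k n] k1 unfolding c1_def N_def
    by (metis (mono_tags) less_le_trans of_nat_mult zero_less_one)
  have c2k: "(real n - 1) * c2 = (real k - 1) * c1" if "2 \<le> k"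
  proof -
    have "(k - 1) * ((n - 1) choose (k - 1)) = (n - 1) * ((n - 1 - 1) choose (k - 1 - 1))"
      using times_binomial_minus1_eq[of "k - 1" "n - 1"] that by simp
    then have "real (k - 1) * c1 = real (n - 1) * real ((n - 2) choose (k - 2))"
      unfolding c1_def by (metis diff_diff_left of_nat_mult one_add_one)
    then show ?thesis using that kn unfolding c2_def by (simp add: of_nat_diff)
  qed
  have aa: "0 \<le> a * (a - 1)"
  proof (cases "card A = 0")
    case True then show ?thesis by (simp add: a_def)
  next
    case False then have "a \<ge> 1" by (simp add: a_def)
    then show ?thesis by simp
  qed
  have an: "a \<le> real n" unfolding a_def using A card_mono[of "{..<n}" A] by simp
  have var: "(\<Sum>S\<in>subs n k. (real (card (A \<inter> S)) / real k - a / real n)^2) \<le> N / real k"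
    unfolding exp s1 s2
    by (rule alg) (use k1 kn N0 c1e c2k aa an in \<open>auto simp: a_def c2_def c1_def\<close>)
  have "(\<Sum>S\<in>subs n k. \<bar>real (card (A \<inter> S)) / real k - a / real n\<bar>) \<le> real (card (subs n k)) * sqrt (1 / real k)"
    by (rule mean_abs_le) (use finite_subs cardI N0 var in \<open>auto simp: N_def\<close>)
  then show ?thesis by (simp add: cardI abs_minus_commute a_def real_sqrt_divide)
qed

lemma agent_cost_lip:
  assumes "1 \<le> l"
  shows "agent_cost l y v \<le> agent_cost l y w + \<bar>v - w\<bar>"
proof -
  have ne: "(\<lambda>j. \<bar>w - y j\<bar>) ` {..<l} \<noteq> {}" using assms by (simp add: lessThan_empty_iff)
  obtain j where j: "j < l" "agent_cost l y w = \<bar>w - y j\<bar>"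
    using Min_in[OF _ ne] unfolding agent_cost_def by auto
  have "agent_cost l y v \<le> \<bar>v - y j\<bar>" unfolding agent_cost_def using j by (intro Min_le) auto
  also have "\<dots> \<le> \<bar>w - y j\<bar> + \<bar>v - w\<bar>" by simp
  finally show ?thesis using j by simp
qed

lemma agent_cost_nonneg:
  assumes "1 \<le> l"
  shows "0 \<le> agent_cost l y v"
proof -
  have ne: "(\<lambda>j. \<bar>v - y j\<bar>) ` {..<l} \<noteq> {}" using assms by (simp add: lessThan_empty_iff)
  show ?thesis unfolding agent_cost_def using ne by (subst Min_ge_iff) auto
qed

theorem theorem4p14:
  "\<exists>C>0. \<forall>(Cand :: real set) (l :: nat) (n :: nat) (x :: nat \<Rightarrow> real)
            (\<epsilon> :: real) (k :: nat) (ybar :: nat set \<Rightarrow> (nat \<Rightarrow> real)).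
     Cand \<subseteq> {0..1} \<and> l \<ge> 1 \<and> (\<forall>i<n. x i \<in> {0..1}) \<and>
     (\<exists>y\<in>profiles Cand l. \<forall>y'\<in>profiles Cand l. social_cost n x l y \<le> social_cost n x l y') \<and>
     (\<forall>S. S \<subseteq> {..<n} \<and> card S = k \<longrightarrow>
        ybar S \<in> profiles Cand l \<and>
        (\<forall>y\<in>profiles Cand l. panel_cost l k x S (ybar S) \<le> panel_cost l k x S y)) \<and>
     0 < \<epsilon> \<and> \<epsilon> < 1 \<and> C / \<epsilon>\<^sup>2 \<le> real k \<and> k \<le> n
     \<longrightarrow> uniform_subset_expectation k n (\<lambda>S. social_cost n x l (ybar S))
           \<le> social_opt Cand n x l + \<epsilon>"
proof (rule exI[of _ 1], intro conjI allI impI)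
  show "(0::real) < 1" by simp
  fix Cand :: "real set" and l n :: nat and x :: "nat \<Rightarrow> real" and \<epsilon> :: real and k :: nat
    and ybar :: "nat set \<Rightarrow> (nat \<Rightarrow> real)"
  assume H: "Cand \<subseteq> {0..1} \<and> l \<ge> 1 \<and> (\<forall>i<n. x i \<in> {0..1}) \<and>
     (\<exists>y\<in>profiles Cand l. \<forall>y'\<in>profiles Cand l. social_cost n x l y \<le> social_cost n x l y') \<and>
     (\<forall>S. S \<subseteq> {..<n} \<and> card S = k \<longrightarrow>
        ybar S \<in> profiles Cand l \<and>
        (\<forall>y\<in>profiles Cand l. panel_cost l k x S (ybar S) \<le> panel_cost l k x S y)) \<and>
     0 < \<epsilon> \<and> \<epsilon> < 1 \<and> 1 / \<epsilon>\<^sup>2 \<le> real k \<and> k \<le> n"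
  from H obtain l1: "1 \<le> l" and x01: "\<forall>i<n. x i \<in> {0..1}" and e0: "0 < \<epsilon>" and e1: "\<epsilon> < 1"
    and ke: "1 / \<epsilon>\<^sup>2 \<le> real k" and kn: "k \<le> n"
    and exy: "\<exists>y\<in>profiles Cand l. \<forall>y'\<in>profiles Cand l. social_cost n x l y \<le> social_cost n x l y'"
    and yS: "\<forall>S. S \<subseteq> {..<n} \<and> card S = k \<longrightarrow>
        ybar S \<in> profiles Cand l \<and>
        (\<forall>y\<in>profiles Cand l. panel_cost l k x S (ybar S) \<le> panel_cost l k x S y)"
    by (elim conjE) (rule that; assumption)
  from exy obtain ys where ys: "ys \<in> profiles Cand l" "\<And>y'. y' \<in> profiles Cand l \<Longrightarrow> social_cost n x l ys \<le> social_cost n x l y'"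
    by blast
  have yb: "panel_cost l k x S (ybar S) \<le> panel_cost l k x S ys" if "S \<in> subs n k" for S
    using yS that ys(1) unfolding subs_def by blast
  have "\<epsilon>\<^sup>2 < 1" using e0 e1 by (simp add: power_less_one_iff abs_less_iff) 
  then have "1 < 1 / \<epsilon>\<^sup>2" using e0 by simp
  then have k1: "1 \<le> k" using ke by simp
  have sqk: "1 / sqrt (real k) \<le> \<epsilon>"
  proof -
    have "sqrt (1 / \<epsilon>\<^sup>2) \<le> sqrt (real k)" using ke by simp
    then have "1 / \<epsilon> \<le> sqrt (real k)" using e0 by (simp add: real_sqrt_divide)
    then show ?thesis using e0 k1 by (simp add: field_simps)
  qed
  define N where "N = real (n choose k)"
  have N0: "N > 0" unfolding N_def using kn by simp
  have nk0: "real n > 0" "real k > 0" using k1 kn by auto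
  have opt: "social_opt Cand n x l = social_cost n x l ys"
    unfolding social_opt_def by (rule cInf_eq_minimum) (use ys in auto)
  define E where "E = uniform_subset_expectation k n (\<lambda>S. social_cost n x l (ybar S))"
  have E_def': "E = (\<Sum>S\<in>subs n k. social_cost n x l (ybar S)) / N"
    unfolding E_def uniform_subset_expectation_def subs_def N_def by simp
  have panel_sum: "(\<Sum>S\<in>subs n k. panel_cost l k x S ys) = N * social_cost n x l ys"
  proof -
    have "(\<Sum>S\<in>subs n k. panel_cost l k x S ys) = (\<Sum>S\<in>subs n k. \<Sum>i\<in>S. agent_cost l ys (x i)) / real k"
      unfolding panel_cost_def by (simp add: sum_divide_distrib)
    also have "\<dots> = real ((n - 1) choose (k - 1)) * (\<Sum>i<n. agent_cost l ys (x i)) / real k"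
      using sum_over_subs[OF k1] by simp
    also have "real ((n - 1) choose (k - 1)) = real k * N / real n"
      using times_binomial_minus1_eq[of k n] k1 nk0 unfolding N_def
      by (simp add: field_simps) (metis of_nat_mult)
    finally show ?thesis using nk0 unfolding social_cost_def by (simp add: field_simps)
  qed
  have bound: "E \<le> social_cost n x l ys + 2 / real M + 1 / sqrt (real k)" if M: "0 < M" for M :: nat
  proof -
    define A where "A b = {i. i < n \<and> b < nat \<lceil>x i * real M\<rceil>}" for b
    define B where "B S = (\<Sum>b<M. \<bar>real (card (A b)) / real n - real (card (A b \<inter> S)) / real k\<bar>) / real M" for S
    have perS: "social_cost n x l (ybar S) \<le> panel_cost l k x S ys + 2 / real M + B S" if S: "S \<in> subs n k" for S
    proof -
      have "social_cost n x l (ybar S) - panel_cost l k x S (ybar S) \<le> 2 / real M + B S"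
        unfolding social_cost_def panel_cost_def B_def A_def
        by (rule deviation[where h = "agent_cost l (ybar S)"]) (use agent_cost_lip[OF l1] x01 S M k1 in \<open>auto simp: subs_def\<close>)
      then show ?thesis using yb[OF S] by simp
    qed
    have Bsum: "(\<Sum>S\<in>subs n k. B S) \<le> N / sqrt (real k)"
    proof -
      have "(\<Sum>S\<in>subs n k. B S) = (\<Sum>b<M. \<Sum>S\<in>subs n k. \<bar>real (card (A b)) / real n - real (card (A b \<inter> S)) / real k\<bar>) / real M"
        unfolding B_def by (simp add: sum_divide_distrib[symmetric] sum.swap[of _ "subs n k"])
      also have "\<dots> \<le> (\<Sum>b<M. N * (1 / sqrt (real k))) / real M"
      proof -
        have vb: "(\<Sum>S\<in>subs n k. \<bar>real (card (A b)) / real n - real (card (A b \<inter> S)) / real k\<bar>) \<le> N * (1 / sqrt (real k))" for b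
          unfolding N_def by (rule var_subs[OF k1 kn]) (auto simp: A_def)
        show ?thesis by (intro divide_right_mono sum_mono vb) simp
      qed
      also have "\<dots> = N / sqrt (real k)" using M by simp
      finally show ?thesis .
    qed
    have "(\<Sum>S\<in>subs n k. social_cost n x l (ybar S)) \<le> (\<Sum>S\<in>subs n k. panel_cost l k x S ys + 2 / real M + B S)"
      by (rule sum_mono) (rule perS)
    also have "\<dots> = N * social_cost n x l ys + N * (2 / real M) + (\<Sum>S\<in>subs n k. B S)"
    proof -
      have cardI: "card (subs n k) = n choose k" unfolding subs_def using n_subsets[of "{..<n}" k] by simp
      show ?thesis using panel_sum cardI by (simp add: sum.distrib N_def)
    qed
    also have "\<dots> \<le> N * social_cost n x l ys + N * (2 / real M) + N / sqrt (real k)" using Bsum by simp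
    finally have "(\<Sum>S\<in>subs n k. social_cost n x l (ybar S)) / N \<le> (N * social_cost n x l ys + N * (2 / real M) + N / sqrt (real k)) / N"
      using N0 by (simp add: divide_right_mono)
    also have "\<dots> = social_cost n x l ys + 2 / real M + 1 / sqrt (real k)" using N0 by (simp add: field_simps)
    finally show ?thesis unfolding E_def' .
  qed
  have lim: "E \<le> social_cost n x l ys + 1 / sqrt (real k)"
  proof (rule ccontr)
    assume "\<not> ?thesis"
    then have d: "0 < E - social_cost n x l ys - 1 / sqrt (real k)" by simp
    obtain M :: nat where M: "2 / (E - social_cost n x l ys - 1 / sqrt (real k)) < real M" using reals_Archimedean2 by blast
    have M0: "0 < M" using M d by (metis divide_pos_pos less_trans of_nat_0_less_iff zero_less_numeral)
    have "2 / real M < E - social_cost n x l ys - 1 / sqrt (real k)"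
      using M d M0 by (simp add: field_simps)
    then show False using bound[OF M0] by simp
  qed
  show "uniform_subset_expectation k n (\<lambda>S. social_cost n x l (ybar S)) \<le> social_opt Cand n x l + \<epsilon>"
    using lim sqk opt unfolding E_def by simp
qed

end
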